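(* Let $n,i,j$ be positive integers and $s=(2^{2n}-1)/3$. Let $$f(x)=(x^{2^i}+x^{2^j})(1+x^s+x^{2s})+x^{2^j}\in\mathbb{F}_{2^{2n}}[x].$$ For a positive integer $k$ let $\widetilde{2^k}$ denote a positive integer inverse of $2^k$ modulo $s$ (i.e. $2^k\widetilde{2^k}\equiv1\pmod s$), and let $u$ be the integer with $0\le u<3$ and $u\equiv(-1)^j(1-2^j\widetilde{2^j})/s\pmod 3$. Then the inverse of $f$ over $\mathbb{F}_{2^{2n}}$ is $$f^{-1}(x)=(x^{\widetilde{2^i}}+x^{\widetilde{2^j}})(1+x^s+x^{2s})+x^{\widetilde{2^j}+us},$$ i.e. $f^{-1}(f(c))=c$ for all $c\in\mathbb{F}_{2^{2n}}$.
   Context: A polynomial $g$ is the inverse of $f$ over $\mathbb{F}_q$ if $g(f(c))=c$ for all $c\in\mathbb{F}_q$. (The polynomial $f$ here is a permutation polynomial of $\mathbb{F}_{2^{2n}}$.) *)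

theory Defs
  imports Main "HOL-Number_Theory.Cong"
begin

definition s_exp :: "nat \<Rightarrow> nat" where
  "s_exp n = (2^(2*n) - 1) div 3"

definition f_poly :: "nat \<Rightarrow> nat \<Rightarrow> nat \<Rightarrow> 'a::field \<Rightarrow> 'a" where
  "f_poly n i j x =
     (x ^ (2^i) + x ^ (2^j)) * (1 + x ^ s_exp n + x ^ (2 * s_exp n)) + x ^ (2^j)"

text \<open>The claimed inverse, given inverses ti, tj of 2^i, 2^j mod s and the integer u.\<close>
definition g_poly :: "nat \<Rightarrow> nat \<Rightarrow> nat \<Rightarrow> nat \<Rightarrow> 'a::field \<Rightarrow> 'a" where
  "g_poly n ti tj u x =
     (x ^ ti + x ^ tj) * (1 + x ^ s_exp n + x ^ (2 * s_exp n)) + x ^ (tj + u * s_exp n)"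

end

theory Submission
  imports Defs
begin

lemma card_zero: "of_nat (card (UNIV::'a::{field,finite} set)) = (0::'a)"
proof -
  have "(\<Sum>y\<in>UNIV. y + 1) = (\<Sum>y\<in>(UNIV::'a set). y)"
    by (rule sum.reindex_bij_witness[of _ "\<lambda>y. y - 1" "\<lambda>y. y + 1"]) auto
  hence "(\<Sum>y\<in>(UNIV::'a set). y) + of_nat (card (UNIV::'a set)) = (\<Sum>y\<in>(UNIV::'a set). y)"
    by (simp add: sum.distrib)
  thus ?thesis by simp
qed

lemma fermat:
  fixes x :: "'a::{field,finite}"
  assumes "x \<noteq> 0"
  shows "x ^ (card (UNIV::'a set) - 1) = 1"
proof -
  let ?N = "UNIV - {0::'a}"
  have "(\<Prod>y\<in>?N. x*y) = (\<Prod>y\<in>?N. y)"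
    by (rule prod.reindex_bij_witness[of _ "\<lambda>y. y / x" "\<lambda>y. x*y"]) (use assms in auto)
  moreover have "(\<Prod>y\<in>?N. x*y) = x ^ card ?N * (\<Prod>y\<in>?N. y)"
    by (simp add: prod.distrib)
  moreover have "(\<Prod>y\<in>?N. y) \<noteq> 0" by simp
  moreover have "card ?N = card (UNIV::'a set) - 1" by (simp add: card_Diff_singleton)
  ultimately show ?thesis by (metis mult_cancel_right1)
qed

lemma frob_one:
  fixes a :: "'a::field"
  assumes two: "(2::'a) = 0" and "a ^ (2 ^ j) = 1"
  shows "a = 1"
  using assms(2)
proof (induction j arbitrary: a)
  case 0 thus ?case by simp
next
  case (Suc j)
  have "(a ^ 2) ^ (2 ^ j) = 1" using Suc.prems by (simp add: power_mult[symmetric] mult.commute)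
  hence b: "a ^ 2 = 1" using Suc.IH by blast
  have "(a + 1) * (a + 1) = a^2 + 2 * a + 1" by (simp add: algebra_simps power2_eq_square)
  also have "\<dots> = 0" using b two by simp
  finally have "a + 1 = 0" by simp
  hence "a = -1" by (simp add: eq_neg_iff_add_eq_0)
  moreover have "(-1::'a) = 1" using two by (metis add_eq_0_iff one_add_one)
  ultimately show ?case by simp
qed

theorem corollary4p4:
  fixes n i j ti tj u :: nat
  assumes fld: "card (UNIV :: 'a::{field,finite} set) = 2 ^ (2 * n)"
    and "n > 0" and "i > 0" and "j > 0"
    and "ti > 0" and "[2 ^ i * ti = 1] (mod s_exp n)"
    and "tj > 0" and "[2 ^ j * tj = 1] (mod s_exp n)"
    and "u < 3"
    and "[int u = (-1) ^ j * ((1 - 2 ^ j * int tj) div int (s_exp n))] (mod 3)"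
  shows "\<forall>c::'a. g_poly n ti tj u (f_poly n i j c) = c"
proof
  fix c :: 'a
  define s where "s = s_exp n"
  have p4: "(4::nat) ^ n mod 3 = 1"
    using power_mod[of "4::nat" 3 n, symmetric] by simp
  have e: "(2::nat) ^ (2 * n) = 4 ^ n" by (simp add: power_mult)
  have q: "(4::nat)^n = 3*(4^n div 3) + 1" using p4 div_mult_mod_eq[of "(4::nat)^n" 3] by linarith
  have card3: "card (UNIV::'a set) - 1 = 3 * s"
  proof -
    have a: "(4::nat)^n - 1 = 3*(4^n div 3)" using q by linarith
    hence "((4::nat)^n - 1) div 3 = 4^n div 3" by simp
    thus ?thesis unfolding fld s_def s_exp_def e using a by simp
  qed
  have "(4::nat) ^ n \<ge> 4" using power_increasing[of 1 n "4::nat"] \<open>n > 0\<close> by simp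
  hence s_pos: "s > 0" using card3 fld e by simp
  have two: "(2::'a) = 0"
  proof -
    have "(of_nat (2 ^ (2*n)) :: 'a) = 0" using card_zero[where 'a='a] fld by simp
    hence "(2::'a) ^ (2*n) = 0" by simp
    thus ?thesis by simp
  qed
  have aa: "\<And>a::'a. a + a = 0" using two by (metis mult_2 mult_zero_left)
  have one3': "(3::'a) = 1"
  proof -
    have "(3::'a) = 2 + 1" by simp
    thus ?thesis using two by simp
  qed
  have one3: "(1::'a) + 1 + 1 = 1" using aa[of 1] by (metis add_0)
  have "2^i*ti \<ge> 1" using \<open>ti>0\<close> by simp
  then obtain mi where mi: "2^i*ti = mi * s + 1"
    using \<open>[2 ^ i * ti = 1] (mod s_exp n)\<close> cong_le_nat s_def by blast
  have "2^j*tj \<ge> 1" using \<open>tj>0\<close> by simp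
  then obtain k where k: "2^j*tj = k * s + 1"
    using \<open>[2 ^ j * tj = 1] (mod s_exp n)\<close> cong_le_nat s_def by blast
  have kd: "(1 - 2 ^ j * int tj) div int s = - int k"
  proof -
    have "1 - 2 ^ j * int tj = int s * (- int k)" using arg_cong[OF k, of int] by simp
    moreover have "(int s * (- int k)) div int s = - int k"
      using s_pos by (subst nonzero_mult_div_cancel_left) auto
    ultimately show ?thesis by (simp only:)
  qed
  have u: "[int u = (-1) ^ j * (- int k)] (mod 3)" using assms(10) kd s_def by simp
  have p2: "[(2::int) ^ j = (-1) ^ j] (mod 3)" by (rule cong_pow) (simp add: cong_def)
  have "[2 ^ j * int u = (-1) ^ j * ((-1) ^ j * (- int k))] (mod 3)"
    by (rule cong_mult[OF p2 u])
  hence "[2 ^ j * int u = - int k] (mod 3)"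
    by (simp add: power_mult_distrib[symmetric])
  hence "[int k + 2 ^ j * int u = 0] (mod 3)"
    by (metis cong_add_lcancel add.right_inverse)
  hence "(3::int) dvd int (k + 2^j*u)" by (simp add: cong_0_iff)
  hence "(3::nat) dvd k + 2^j*u" by (metis int_dvd_int_iff of_nat_numeral)
  then obtain m where m: "k + 2^j*u = 3*m" by (elim dvdE)
  have mj: "2^j*(tj + u*s) = m * (3*s) + 1"
    using k m by (simp add: algebra_simps) (metis add_mult_distrib mult.assoc mult.commute)
  show "g_poly n ti tj u (f_poly n i j c) = c"
  proof (cases "c = 0")
    case True
    have fz: "f_poly n i j c = 0" unfolding f_poly_def True
      by (simp add: zero_power)
    have "g_poly n ti tj u (0::'a) = 0" unfolding g_poly_def
      using \<open>ti>0\<close> \<open>tj>0\<close> by (simp add: zero_power)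
    thus ?thesis using fz True by simp
  next
    case False
    define w where "w = c ^ s"
    have c3: "c ^ (3*s) = 1" using fermat[OF False] card3 by simp
    have w3: "w ^ 3 = 1" using c3 unfolding w_def by (simp add: power_mult[symmetric] mult.commute)
    show ?thesis
    proof (cases "w = 1")
      case True
      have cs2: "c ^ (2*s) = 1" using True unfolding w_def by (metis power_mult mult.commute power_one)
      have fc: "f_poly n i j c = c ^ (2^i)"
        unfolding f_poly_def s_def[symmetric] using True cs2 one3 one3' aa unfolding w_def
        by (simp add: add.assoc)
      define y where "y = c ^ (2^i)"
      have ys: "y ^ s = 1" unfolding y_def using True unfolding w_def
        by (metis power_mult mult.commute power_one)
      have ys2: "y ^ (2*s) = 1" using ys by (metis power_mult mult.commute power_one)
      have yu: "y ^ (tj + u*s) = y ^ tj"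
        by (metis power_add power_mult mult.commute ys power_one mult_1_right)
      have "g_poly n ti tj u y = y ^ ti"
        unfolding g_poly_def s_def[symmetric] yu ys ys2 one3 mult_1_right add.assoc aa add_0_right
        by (simp only: add_0_left mult_1_right add.assoc aa add_0_right)
      also have "\<dots> = c ^ (mi * s + 1)" unfolding y_def power_mult[symmetric] mi by (rule refl)
      also have "\<dots> = (c ^ s) ^ mi * c" by (metis power_add power_mult mult.commute power_one_right)
      also have "\<dots> = c" using True unfolding w_def by simp
      finally show ?thesis using fc y_def by simp
    next
      case False
      have w2: "1 + w + w^2 = 0"
      proof -
        have "(w - 1) * (1 + w + w^2) = w^3 - 1" by (simp add: algebra_simps power2_eq_square power3_eq_cube)
        thus ?thesis using w3 False by simp
      qed
      have cs2: "c ^ (2*s) = w^2" unfolding w_def by (metis power_mult mult.commute)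
      have fc: "f_poly n i j c = c ^ (2^j)"
        unfolding f_poly_def s_def[symmetric] using w2 cs2 unfolding w_def by simp
      define y where "y = c ^ (2^j)"
      define v where "v = y ^ s"
      have v: "v = w ^ (2^j)" unfolding v_def y_def w_def by (metis power_mult mult.commute)
      have v1: "v \<noteq> 1" using frob_one[OF two, of w j] False v by auto
      have v3: "v ^ 3 = 1" using v w3 by (metis power_mult mult.commute power_one)
      have v2: "1 + v + v^2 = 0"
      proof -
        have "(v - 1) * (1 + v + v^2) = v^3 - 1" by (simp add: algebra_simps power2_eq_square power3_eq_cube)
        thus ?thesis using v3 v1 by simp
      qed
      have ys2: "y ^ (2*s) = v^2" unfolding v_def by (metis power_mult mult.commute)
      have "g_poly n ti tj u y = y ^ (tj + u*s)"
        unfolding g_poly_def s_def[symmetric] using v2 ys2 v_def by simp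
      also have "\<dots> = c ^ (m * (3 * s) + 1)" unfolding y_def power_mult[symmetric] mj by (rule refl)
      also have "\<dots> = (c ^ (3 * s)) ^ m * c" by (metis power_add power_mult mult.commute power_one_right)
      also have "\<dots> = c" using c3 by simp
      finally show ?thesis using fc y_def by simp
    qed
  qed
qed

end
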